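(* There is no nonzero finite-dimensional smooth genuine $k$-representation of $\widetilde G$.
   Context: Let $p$ be an odd prime and $k$ an algebraically closed field of characteristic $p$. Let $G=\mathrm{GL}_2(\mathbb{Q}_p)$, $v$ the $p$-adic valuation, $\mu_2=\{\pm1\}$, $\omega\colon\mathbb{Q}_p^\times\to\mathbb{F}_p^\times$, $x\mapsto (xp^{-v(x)}\bmod p)$, Hilbert symbol $(a,b)=\omega\big((-1)^{v(a)v(b)}b^{v(a)}/a^{v(b)}\big)^{(p-1)/2}$. For $g=\begin{pmatrix}a&b\\c&d\end{pmatrix}$ put $\mathfrak c(g)=c$ if $c\neq0$, $\mathfrak c(g)=d$ if $c=0$. The metaplectic cover $\widetilde G$ is the topological group $G\times\mu_2$ with $(g_1,\zeta_1)(g_2,\zeta_2)=(g_1g_2,\zeta_1\zeta_2\sigma(g_1,g_2))$, $\sigma(g_1,g_2)=\big(\mathfrak c(g_1g_2)/\mathfrak c(g_1),\ \det(g_1)\mathfrak c(g_1g_2)/\mathfrak c(g_2)\big)$. $\iota\colon\mu_2\to k^\times$ is the nontrivial character; a smooth representation is genuine if $\mu_2$ acts through $\iota$. *)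

theory Defs
  imports "HOL-Analysis.Analysis" "HOL-Computational_Algebra.Computational_Algebra"
    "HOL-Number_Theory.Number_Theory"
begin

text \<open>p-adic valuation of a nonzero rational (value 0 at 0, never used there).\<close>
definition rat_val :: "nat \<Rightarrow> rat \<Rightarrow> int" where
  "rat_val p r = (if r = 0 then 0 else
     (let (a, b) = quotient_of r in
        int (multiplicity (int p) a) - int (multiplicity (int p) b)))"

definition rat_pabs :: "nat \<Rightarrow> rat \<Rightarrow> real" where
  "rat_pabs p r = (if r = 0 then 0 else real p powr (- real_of_int (rat_val p r)))"

definition pcauchy :: "nat \<Rightarrow> (nat \<Rightarrow> rat) \<Rightarrow> bool" where
  "pcauchy p f \<longleftrightarrow> (\<forall>e>0. \<exists>N. \<forall>m\<ge>N. \<forall>n\<ge>N. rat_pabs p (f m - f n) < e)"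

definition pequiv :: "nat \<Rightarrow> ((nat \<Rightarrow> rat) \<times> (nat \<Rightarrow> rat)) set" where
  "pequiv p = {(f, g). pcauchy p f \<and> pcauchy p g \<and>
                  (\<lambda>n. rat_pabs p (f n - g n)) \<longlonglongrightarrow> 0}"

definition Qp :: "nat \<Rightarrow> (nat \<Rightarrow> rat) set set" where
  "Qp p = {f. pcauchy p f} // pequiv p"

definition qcls :: "nat \<Rightarrow> (nat \<Rightarrow> rat) \<Rightarrow> (nat \<Rightarrow> rat) set" where
  "qcls p f = pequiv p `` {f}"

definition qrep :: "(nat \<Rightarrow> rat) set \<Rightarrow> nat \<Rightarrow> rat" where
  "qrep X = (SOME f. f \<in> X)"

definition qof_rat :: "nat \<Rightarrow> rat \<Rightarrow> (nat \<Rightarrow> rat) set" where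
  "qof_rat p r = qcls p (\<lambda>_. r)"

definition qzero :: "nat \<Rightarrow> (nat \<Rightarrow> rat) set" where "qzero p = qof_rat p 0"
definition qone :: "nat \<Rightarrow> (nat \<Rightarrow> rat) set" where "qone p = qof_rat p 1"

definition qadd :: "nat \<Rightarrow> (nat \<Rightarrow> rat) set \<Rightarrow> (nat \<Rightarrow> rat) set \<Rightarrow> (nat \<Rightarrow> rat) set" where
  "qadd p X Y = qcls p (\<lambda>n. qrep X n + qrep Y n)"

definition qneg :: "nat \<Rightarrow> (nat \<Rightarrow> rat) set \<Rightarrow> (nat \<Rightarrow> rat) set" where
  "qneg p X = qcls p (\<lambda>n. - qrep X n)"

definition qsub :: "nat \<Rightarrow> (nat \<Rightarrow> rat) set \<Rightarrow> (nat \<Rightarrow> rat) set \<Rightarrow> (nat \<Rightarrow> rat) set" where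
  "qsub p X Y = qadd p X (qneg p Y)"

definition qmul :: "nat \<Rightarrow> (nat \<Rightarrow> rat) set \<Rightarrow> (nat \<Rightarrow> rat) set \<Rightarrow> (nat \<Rightarrow> rat) set" where
  "qmul p X Y = qcls p (\<lambda>n. qrep X n * qrep Y n)"

text \<open>Multiplicative inverse (for nonzero X; terms of the representative that vanish are
  replaced by 0, which does not change the class).\<close>
definition qinv :: "nat \<Rightarrow> (nat \<Rightarrow> rat) set \<Rightarrow> (nat \<Rightarrow> rat) set" where
  "qinv p X = qcls p (\<lambda>n. inverse (qrep X n))"

definition qdiv :: "nat \<Rightarrow> (nat \<Rightarrow> rat) set \<Rightarrow> (nat \<Rightarrow> rat) set \<Rightarrow> (nat \<Rightarrow> rat) set" where
  "qdiv p X Y = qmul p X (qinv p Y)"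

definition qpow :: "nat \<Rightarrow> (nat \<Rightarrow> rat) set \<Rightarrow> nat \<Rightarrow> (nat \<Rightarrow> rat) set" where
  "qpow p X n = (qmul p X ^^ n) (qone p)"

definition qpowi :: "nat \<Rightarrow> (nat \<Rightarrow> rat) set \<Rightarrow> int \<Rightarrow> (nat \<Rightarrow> rat) set" where
  "qpowi p X k = (if k \<ge> 0 then qpow p X (nat k) else qinv p (qpow p X (nat (- k))))"

definition qval :: "nat \<Rightarrow> (nat \<Rightarrow> rat) set \<Rightarrow> int" where
  "qval p X = (THE v. eventually (\<lambda>n. rat_val p (qrep X n) = v) sequentially)"

text \<open>Residue mod p of a rational with p-adic valuation 0 (as an integer in [0,p)).\<close>
definition rat_res :: "nat \<Rightarrow> rat \<Rightarrow> int" where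
  "rat_res p r = (let (a, b) = quotient_of r in
                    (THE z. 0 \<le> z \<and> z < int p \<and> [a = z * b] (mod int p)))"

text \<open>omega(x) = (x p^(-v(x)) mod p), an element of F_p^x, represented in {1,...,p-1}.\<close>
definition omega :: "nat \<Rightarrow> (nat \<Rightarrow> rat) set \<Rightarrow> int" where
  "omega p X = (let U = qmul p X (qof_rat p (of_nat p powi (- qval p X))) in
                 (THE z. eventually (\<lambda>n. rat_res p (qrep U n) = z) sequentially))"

text \<open>Hilbert symbol (a,b) = omega((-1)^(v(a)v(b)) b^v(a) / a^v(b))^((p-1)/2) in F_p^x,
  which lies in {1,-1} = mu_2; we return it as the integer 1 or -1.\<close>
definition hilbert :: "nat \<Rightarrow> (nat \<Rightarrow> rat) set \<Rightarrow> (nat \<Rightarrow> rat) set \<Rightarrow> int" where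
  "hilbert p a b =
     (let w = omega p (qdiv p (qmul p (qpowi p (qof_rat p (-1)) (qval p a * qval p b))
                                      (qpowi p b (qval p a)))
                              (qpowi p a (qval p b)));
          s = (w ^ ((p - 1) div 2)) mod int p
      in if s = 1 then 1 else -1)"

type_synonym qp = "(nat \<Rightarrow> rat) set"
type_synonym mat2 = "qp \<times> qp \<times> qp \<times> qp"  \<comment> \<open>(a, b, c, d) = [[a, b], [c, d]]\<close>

definition mmul :: "nat \<Rightarrow> mat2 \<Rightarrow> mat2 \<Rightarrow> mat2" where
  "mmul p g h = (case g of (a, b, c, d) \<Rightarrow> case h of (a', b', c', d') \<Rightarrow>
     (qadd p (qmul p a a') (qmul p b c'), qadd p (qmul p a b') (qmul p b d'),
      qadd p (qmul p c a') (qmul p d c'), qadd p (qmul p c b') (qmul p d d')))"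

definition mdet :: "nat \<Rightarrow> mat2 \<Rightarrow> qp" where
  "mdet p g = (case g of (a, b, c, d) \<Rightarrow> qsub p (qmul p a d) (qmul p b c))"

definition mone :: "nat \<Rightarrow> mat2" where
  "mone p = (qone p, qzero p, qzero p, qone p)"

definition GL2 :: "nat \<Rightarrow> mat2 set" where
  "GL2 p = {(a, b, c, d). a \<in> Qp p \<and> b \<in> Qp p \<and> c \<in> Qp p \<and> d \<in> Qp p \<and>
                          mdet p (a, b, c, d) \<noteq> qzero p}"

definition cfun :: "nat \<Rightarrow> mat2 \<Rightarrow> qp" where
  "cfun p g = (case g of (a, b, c, d) \<Rightarrow> if c \<noteq> qzero p then c else d)"

definition sigma :: "nat \<Rightarrow> mat2 \<Rightarrow> mat2 \<Rightarrow> int" where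
  "sigma p g1 g2 = hilbert p (qdiv p (cfun p (mmul p g1 g2)) (cfun p g1))
                             (qdiv p (qmul p (mdet p g1) (cfun p (mmul p g1 g2))) (cfun p g2))"

text \<open>The metaplectic cover: G x mu_2 with mu_2 = {1,-1} (as integers).\<close>
definition Gt :: "nat \<Rightarrow> (mat2 \<times> int) set" where
  "Gt p = GL2 p \<times> {1, -1}"

definition gt_mult :: "nat \<Rightarrow> mat2 \<times> int \<Rightarrow> mat2 \<times> int \<Rightarrow> mat2 \<times> int" where
  "gt_mult p x y = (case x of (g1, z1) \<Rightarrow> case y of (g2, z2) \<Rightarrow>
                      (mmul p g1 g2, z1 * z2 * sigma p g1 g2))"

definition gt_one :: "nat \<Rightarrow> mat2 \<times> int" where
  "gt_one p = (mone p, 1)"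

text \<open>Principal congruence subgroups K_n = 1 + p^n M_2(Z_p); together with the discreteness
  of mu_2 they give a neighbourhood basis of the identity of the topological group G x mu_2,
  namely the sets K_n x {1}.\<close>
definition vge :: "nat \<Rightarrow> qp \<Rightarrow> nat \<Rightarrow> bool" where
  "vge p x n \<longleftrightarrow> x = qzero p \<or> qval p x \<ge> int n"

definition Kn :: "nat \<Rightarrow> nat \<Rightarrow> mat2 set" where
  "Kn p n = {(a, b, c, d) \<in> GL2 p. vge p (qsub p a (qone p)) n \<and> vge p b n \<and>
                                   vge p c n \<and> vge p (qsub p d (qone p)) n}"

text \<open>A representation of dimension CARD('n) \<ge> 1 over k, given by matrices.\<close>
definition is_rep :: "nat \<Rightarrow> (mat2 \<times> int \<Rightarrow> 'k::field ^'n^'n) \<Rightarrow> bool" where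
  "is_rep p \<rho> \<longleftrightarrow> \<rho> (gt_one p) = mat 1 \<and>
     (\<forall>x\<in>Gt p. \<forall>y\<in>Gt p. \<rho> (gt_mult p x y) = \<rho> x ** \<rho> y)"

text \<open>Smooth: the stabiliser of every vector is open, i.e. contains some K_n x {1}.\<close>
definition is_smooth :: "nat \<Rightarrow> (mat2 \<times> int \<Rightarrow> 'k::field ^'n^'n) \<Rightarrow> bool" where
  "is_smooth p \<rho> \<longleftrightarrow> (\<forall>v::'k^'n. \<exists>n. \<forall>g\<in>Kn p n. \<rho> (g, 1) *v v = v)"

text \<open>Genuine: mu_2 acts through the nontrivial character iota, iota(-1) = -1.\<close>
definition is_genuine :: "nat \<Rightarrow> (mat2 \<times> int \<Rightarrow> 'k::field ^'n^'n) \<Rightarrow> bool" where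
  "is_genuine p \<rho> \<longleftrightarrow> \<rho> (mone p, -1) = - mat 1"

end

theory Submission
  imports Defs
begin


lemma prime_elem_intp: "prime p \<Longrightarrow> prime_elem (int p)"
  by simp

lemma rat_val_frac:
  assumes "prime p" "a \<noteq> 0" "b \<noteq> 0"
  shows "rat_val p (of_int a / of_int b) = int (multiplicity (int p) a) - int (multiplicity (int p) b)"
proof -
  let ?r = "of_int a / of_int b :: rat"
  obtain a0 b0 where q: "quotient_of ?r = (a0,b0)" by (cases "quotient_of ?r")
  have r: "?r = of_int a0 / of_int b0" by (rule quotient_of_div[OF q])
  have b0: "b0 > 0" using quotient_of_denom_pos[OF q] .
  have rnz: "?r \<noteq> 0" using assms by simp
  hence a0: "a0 \<noteq> 0" using r by auto
  have "of_int a * of_int b0 = (of_int a0 * of_int b :: rat)"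
    using r assms b0 by (simp add: field_simps)
  hence eq: "a * b0 = a0 * b" by (metis of_int_eq_iff of_int_mult)
  have pe: "prime_elem (int p)" using assms(1) by simp
  have "multiplicity (int p) (a*b0) = multiplicity (int p) (a0*b)" using eq by simp
  hence "multiplicity (int p) a + multiplicity (int p) b0 = multiplicity (int p) a0 + multiplicity (int p) b"
    using prime_elem_multiplicity_mult_distrib[OF pe] assms a0 b0 by simp
  thus ?thesis unfolding rat_val_def using q rnz by simp
qed

lemma rat_frac_ex:
  assumes "x \<noteq> (0::rat)"
  obtains a b where "a \<noteq> 0" "b \<noteq> 0" "x = of_int a / of_int b"
proof -
  obtain a b where q: "quotient_of x = (a,b)" by (cases "quotient_of x")
  have "x = of_int a / of_int b" by (rule quotient_of_div[OF q])
  moreover have "b > 0" using quotient_of_denom_pos[OF q] .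
  ultimately show ?thesis using that assms by force
qed

lemma rat_val_mult:
  assumes "prime p" "x \<noteq> 0" "y \<noteq> 0"
  shows "rat_val p (x * y) = rat_val p x + rat_val p y"
proof -
  obtain a b where ab: "a \<noteq> 0" "b \<noteq> 0" "x = of_int a / of_int b" using rat_frac_ex[OF assms(2)] by blast
  obtain c d where cd: "c \<noteq> 0" "d \<noteq> 0" "y = of_int c / of_int d" using rat_frac_ex[OF assms(3)] by blast
  have e: "x * y = of_int (a*c) / of_int (b*d)" using ab cd by simp
  have pe: "prime_elem (int p)" using assms(1) by simp
  let ?m = "multiplicity (int p)"
  have "rat_val p (x*y) = int (?m (a*c)) - int (?m (b*d))" unfolding e
    by (rule rat_val_frac) (use ab cd assms in auto)
  moreover have "rat_val p x = int (?m a) - int (?m b)" unfolding ab(3)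
    by (rule rat_val_frac) (use ab assms in auto)
  moreover have "rat_val p y = int (?m c) - int (?m d)" unfolding cd(3)
    by (rule rat_val_frac) (use cd assms in auto)
  moreover have "?m (a*c) = ?m a + ?m c" "?m (b*d) = ?m b + ?m d"
    using prime_elem_multiplicity_mult_distrib[OF pe] ab cd by auto
  ultimately show ?thesis by simp
qed

lemma rat_val_inverse:
  assumes "prime p" "x \<noteq> 0"
  shows "rat_val p (inverse x) = - rat_val p x"
proof -
  obtain a b where ab: "a \<noteq> 0" "b \<noteq> 0" "x = of_int a / of_int b" using rat_frac_ex[OF assms(2)] by blast
  have "inverse x = of_int b / of_int a" using ab by simp
  thus ?thesis using rat_val_frac[OF assms(1)] ab by simp
qed

lemma rat_val_divide:
  assumes "prime p" "x \<noteq> 0" "y \<noteq> 0"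
  shows "rat_val p (x / y) = rat_val p x - rat_val p y"
  using rat_val_mult[OF assms(1,2), of "inverse y"] rat_val_inverse[OF assms(1,3)] assms
  by (simp add: divide_inverse)

lemma p_ndvd_1: "prime p \<Longrightarrow> \<not> int p dvd 1"
  by (metis prime_nat_int_transfer not_prime_unit)

lemma p_ndvd_m1: "prime p \<Longrightarrow> \<not> int p dvd (-1)"
  using p_ndvd_1 by simp

lemma rat_val_int:
  assumes "prime p" "\<not> int p dvd a"
  shows "rat_val p (of_int a) = 0"
proof -
  have a: "a \<noteq> 0" using assms by auto
  have "rat_val p (of_int a / of_int 1) = int (multiplicity (int p) a) - int (multiplicity (int p) 1)"
    by (rule rat_val_frac[OF assms(1) a]) simp
  moreover have "multiplicity (int p) a = 0" "multiplicity (int p) 1 = 0"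
    using assms p_ndvd_1 not_dvd_imp_multiplicity_0 by auto
  ultimately show ?thesis by simp
qed

lemma rat_val_one: "prime p \<Longrightarrow> rat_val p 1 = 0"
  using rat_val_int[of p 1] p_ndvd_1 by simp

lemma rat_val_minus:
  assumes "prime p" "x \<noteq> 0"
  shows "rat_val p (- x) = rat_val p x"
proof -
  have "rat_val p (of_int (-1)) = 0"
    using assms(1) p_ndvd_m1 by (intro rat_val_int) auto
  hence "rat_val p ((-1) * x) = rat_val p x" using rat_val_mult[OF assms(1), of "-1" x] assms by simp
  thus ?thesis by simp
qed

lemma rat_val_ppow_nat:
  assumes "prime p"
  shows "rat_val p (of_nat p ^ k) = int k"
proof -
  have pe: "prime_elem (int p)" using assms(1) by simp
  have "p \<noteq> 0" using assms prime_gt_0_nat by auto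
  hence "rat_val p (of_int (int p ^ k) / of_int 1) = int (multiplicity (int p) (int p ^ k)) - int (multiplicity (int p) 1)"
    by (intro rat_val_frac[OF assms(1)]) auto
  moreover have "multiplicity (int p) 1 = 0"
    using assms p_ndvd_1 not_dvd_imp_multiplicity_0 by auto
  ultimately show ?thesis using multiplicity_prime_power[OF pe] by simp
qed

lemma rat_val_ppow:
  assumes "prime p"
  shows "rat_val p (of_nat p powi k) = k"
proof (cases "k \<ge> 0")
  case True
  then show ?thesis using rat_val_ppow_nat[OF assms, of "nat k"]
    by (simp add: power_int_def)
next
  case False
  have "p \<noteq> 0" using assms prime_gt_0_nat by auto
  have e: "(of_nat p :: rat) powi k = inverse (of_nat p ^ nat (-k))"
    using False by (simp add: power_int_def power_inverse)
  show ?thesis unfolding e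
    using rat_val_ppow_nat[OF assms, of "nat (-k)"]
      rat_val_inverse[OF assms, of "of_nat p ^ nat (-k)"] \<open>p \<noteq> 0\<close> False by simp
qed

lemma mult_sum_ge:
  assumes "prime p" "u + w \<noteq> (0::int)"
  shows "multiplicity (int p) (u + w) \<ge> min (multiplicity (int p) u) (multiplicity (int p) w)"
proof -
  let ?k = "min (multiplicity (int p) u) (multiplicity (int p) w)"
  have "int p ^ ?k dvd u" by (rule multiplicity_dvd') simp
  moreover have "int p ^ ?k dvd w" by (rule multiplicity_dvd') simp
  ultimately have "int p ^ ?k dvd u + w" by simp
  moreover have "\<not> is_unit (int p)" using p_ndvd_1[OF assms(1)] by simp
  ultimately show ?thesis using multiplicity_geI assms(2) by blast
qed

lemma rat_val_add:
  assumes "prime p" "x \<noteq> 0" "y \<noteq> 0" "x + y \<noteq> 0"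
  shows "rat_val p (x + y) \<ge> min (rat_val p x) (rat_val p y)"
proof -
  obtain a b where ab: "a \<noteq> 0" "b \<noteq> 0" "x = of_int a / of_int b" using rat_frac_ex[OF assms(2)] by blast
  obtain c d where cd: "c \<noteq> 0" "d \<noteq> 0" "y = of_int c / of_int d" using rat_frac_ex[OF assms(3)] by blast
  have pe: "prime_elem (int p)" using assms(1) by simp
  have xy: "x + y = of_int (a*d + c*b) / of_int (b*d)" using ab cd by (simp add: field_simps)
  have nz: "a*d + c*b \<noteq> 0"
  proof
    assume h: "a*d + c*b = 0"
    have "x + y = of_int (a*d + c*b) / of_int (b*d)" by (rule xy)
    also have "\<dots> = 0" unfolding h by simp
    finally show False using assms(4) by simp
  qed
  let ?m = "multiplicity (int p)"
  have "rat_val p (x+y) = int (?m (a*d + c*b)) - int (?m (b*d))"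
    unfolding xy by (rule rat_val_frac[OF assms(1) nz]) (use ab cd in simp)
  moreover have "?m (b*d) = ?m b + ?m d" using prime_elem_multiplicity_mult_distrib[OF pe] ab cd by auto
  moreover have "?m (a*d + c*b) \<ge> min (?m (a*d)) (?m (c*b))" by (rule mult_sum_ge[OF assms(1) nz])
  moreover have "?m (a*d) = ?m a + ?m d" "?m (c*b) = ?m c + ?m b"
    using prime_elem_multiplicity_mult_distrib[OF pe] ab cd by auto
  moreover have "rat_val p x = int (?m a) - int (?m b)" "rat_val p y = int (?m c) - int (?m d)"
    using rat_val_frac[OF assms(1)] ab cd by auto
  ultimately show ?thesis by linarith
qed

definition sm :: "nat \<Rightarrow> int \<Rightarrow> rat \<Rightarrow> bool" where
  "sm p K r \<longleftrightarrow> r = 0 \<or> rat_val p r \<ge> K"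

lemma sm_0 [simp]: "sm p K 0" by (simp add: sm_def)

lemma sm_mono: "sm p K r \<Longrightarrow> L \<le> K \<Longrightarrow> sm p L r"
  unfolding sm_def by auto

lemma sm_add: "prime p \<Longrightarrow> sm p K a \<Longrightarrow> sm p K b \<Longrightarrow> sm p K (a + b)"
  unfolding sm_def using rat_val_add[of p a b] by fastforce

lemma sm_neg: "prime p \<Longrightarrow> sm p K (- a) \<longleftrightarrow> sm p K a"
  unfolding sm_def using rat_val_minus[of p a] by (cases "a = 0") auto

lemma sm_diff: "prime p \<Longrightarrow> sm p K a \<Longrightarrow> sm p K b \<Longrightarrow> sm p K (a - b)"
  using sm_add[of p K a "-b"] sm_neg[of p K b] by simp

lemma sm_mult:
  assumes "prime p" "sm p K a" "sm p L b"
  shows "sm p (K + L) (a * b)"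
proof (cases "a = 0 \<or> b = 0")
  case True thus ?thesis by (auto simp: sm_def)
next
  case False
  hence "rat_val p (a*b) = rat_val p a + rat_val p b" using rat_val_mult[OF assms(1)] by blast
  moreover have "rat_val p a \<ge> K" "rat_val p b \<ge> L" using assms(2,3) False unfolding sm_def by auto
  ultimately show ?thesis unfolding sm_def by simp
qed

lemma sm_cmult:
  assumes "prime p" "c \<noteq> 0" "sm p (K - rat_val p c) a"
  shows "sm p K (c * a)"
proof (cases "a = 0")
  case True thus ?thesis by (auto simp: sm_def)
next
  case False
  hence "rat_val p (c*a) = rat_val p c + rat_val p a" using rat_val_mult[OF assms(1,2)] by blast
  moreover have "rat_val p a \<ge> K - rat_val p c" using assms(3) False unfolding sm_def by auto
  ultimately show ?thesis unfolding sm_def by simp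
qed

lemma sm_self: "sm p (rat_val p r) r"
  unfolding sm_def by auto

lemma sm_all_zero: "(\<And>K. sm p K r) \<Longrightarrow> r = 0"
  unfolding sm_def by (metis add1_zle_eq less_irrefl)

text \<open>strict ultrametric: a small perturbation does not change the valuation\<close>
lemma rat_val_perturb:
  assumes "prime p" "r \<noteq> 0" "sm p (rat_val p r + 1) (x - r)"
  shows "x \<noteq> 0 \<and> rat_val p x = rat_val p r"
proof -
  have x: "x \<noteq> 0"
  proof
    assume "x = 0"
    hence "sm p (rat_val p r + 1) r" using assms(3) sm_neg[OF assms(1)] by (metis diff_0)
    thus False using assms(2) unfolding sm_def by simp
  qed
  show ?thesis
  proof (cases "x - r = 0")
    case True thus ?thesis using x by simp
  next
    case False
    have d: "rat_val p (x - r) \<ge> rat_val p r + 1" using assms(3) False unfolding sm_def by simp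
    have "rat_val p ((x - r) + r) \<ge> min (rat_val p (x - r)) (rat_val p r)"
      using rat_val_add[OF assms(1) False assms(2)] x by simp
    hence 1: "rat_val p x \<ge> rat_val p r" using d by simp
    have "rat_val p (x + - (x - r)) \<ge> min (rat_val p x) (rat_val p (-(x-r)))"
      using rat_val_add[OF assms(1) x, of "-(x-r)"] False assms(2) by simp
    hence "rat_val p r \<ge> min (rat_val p x) (rat_val p (x-r))"
      using rat_val_minus[OF assms(1) False] by simp
    hence "rat_val p r \<ge> rat_val p x" using d by linarith
    thus ?thesis using 1 x by simp
  qed
qed


section \<open>Null sequences and the basic structure of Qp on rational constants\<close>

definition null :: "nat \<Rightarrow> (nat \<Rightarrow> rat) \<Rightarrow> bool" where
  "null p f \<longleftrightarrow> (\<forall>K. eventually (\<lambda>n. sm p K (f n)) sequentially)"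

lemma rat_pabs_nonneg: "rat_pabs p r \<ge> 0"
  unfolding rat_pabs_def by simp

lemma pabs_lt_sm:
  assumes "prime p" "rat_pabs p r < real p powr (- real_of_int K)"
  shows "sm p K r"
proof (cases "r = 0")
  case False
  have p1: "real p > 1" using prime_gt_1_nat assms by simp
  have "real p powr (- real_of_int (rat_val p r)) < real p powr (- real_of_int K)"
    using assms(2) False by (simp add: rat_pabs_def)
  hence "- real_of_int (rat_val p r) < - real_of_int K" using p1 by (simp add: powr_less_cancel_iff)
  thus ?thesis unfolding sm_def by simp
qed (simp add: sm_def)

lemma sm_pabs_le:
  assumes "prime p" "sm p K r"
  shows "rat_pabs p r \<le> real p powr (- real_of_int K)"
proof (cases "r = 0")
  case False
  have p1: "real p > 1" using prime_gt_1_nat assms by simp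
  have "rat_val p r \<ge> K" using assms(2) False unfolding sm_def by simp
  hence "real p powr (- real_of_int (rat_val p r)) \<le> real p powr (- real_of_int K)"
    using p1 by (intro powr_mono) auto
  thus ?thesis using False by (simp add: rat_pabs_def)
qed (simp add: rat_pabs_def)

lemma pow_small:
  assumes "prime p" "e > 0"
  shows "\<exists>K. real p powr (- real_of_int K) < e"
proof -
  have p1: "real p > 1" using prime_gt_1_nat assms by simp
  obtain n where n: "(1 / real p) ^ n < e" using real_arch_pow_inv[OF assms(2), of "1 / real p"] p1 by auto
  have "real p powr (- real_of_int (int n)) = inverse (real p powr real n)"
    by (simp add: powr_minus)
  also have "\<dots> = (1 / real p) ^ n" using p1 by (simp add: powr_realpow power_one_over inverse_eq_divide)
  finally have "real p powr (- real_of_int (int n)) < e" using n by simp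
  thus ?thesis by blast
qed

lemma null_iff:
  assumes "prime p"
  shows "((\<lambda>n. rat_pabs p (f n)) \<longlonglongrightarrow> 0) \<longleftrightarrow> null p f"
proof
  assume L: "(\<lambda>n. rat_pabs p (f n)) \<longlonglongrightarrow> 0"
  show "null p f" unfolding null_def
  proof
    fix K
    have "real p powr (- real_of_int K) > 0" using prime_gt_1_nat[OF assms] by simp
    then obtain N where N: "\<forall>n\<ge>N. norm (rat_pabs p (f n) - 0) < real p powr (- real_of_int K)"
      using L unfolding LIMSEQ_iff by blast
    show "eventually (\<lambda>n. sm p K (f n)) sequentially" unfolding eventually_sequentially
      using N pabs_lt_sm[OF assms] rat_pabs_nonneg by auto
  qed
next
  assume Nl: "null p f"
  show "(\<lambda>n. rat_pabs p (f n)) \<longlonglongrightarrow> 0" unfolding LIMSEQ_iff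
  proof (intro allI impI)
    fix e :: real assume "e > 0"
    then obtain K where K: "real p powr (- real_of_int K) < e" using pow_small[OF assms] by blast
    obtain N where N: "\<forall>n\<ge>N. sm p K (f n)" using Nl unfolding null_def eventually_sequentially by blast
    show "\<exists>no. \<forall>n\<ge>no. norm (rat_pabs p (f n) - 0) < e"
      using N sm_pabs_le[OF assms] K rat_pabs_nonneg by (intro exI[of _ N]) (auto intro: le_less_trans)
  qed
qed

lemma cauchy_iff:
  assumes "prime p"
  shows "pcauchy p f \<longleftrightarrow> (\<forall>K. \<exists>N. \<forall>m\<ge>N. \<forall>n\<ge>N. sm p K (f m - f n))"
proof
  assume C: "pcauchy p f"
  show "\<forall>K. \<exists>N. \<forall>m\<ge>N. \<forall>n\<ge>N. sm p K (f m - f n)"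
  proof
    fix K
    have "real p powr (- real_of_int K) > 0" using prime_gt_1_nat[OF assms] by simp
    then obtain N where "\<forall>m\<ge>N. \<forall>n\<ge>N. rat_pabs p (f m - f n) < real p powr (- real_of_int K)"
      using C unfolding pcauchy_def by blast
    thus "\<exists>N. \<forall>m\<ge>N. \<forall>n\<ge>N. sm p K (f m - f n)" using pabs_lt_sm[OF assms] by blast
  qed
next
  assume C: "\<forall>K. \<exists>N. \<forall>m\<ge>N. \<forall>n\<ge>N. sm p K (f m - f n)"
  show "pcauchy p f" unfolding pcauchy_def
  proof (intro allI impI)
    fix e :: real assume "e > 0"
    then obtain K where K: "real p powr (- real_of_int K) < e" using pow_small[OF assms] by blast
    obtain N where N: "\<forall>m\<ge>N. \<forall>n\<ge>N. sm p K (f m - f n)" using C by blast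
    show "\<exists>N. \<forall>m\<ge>N. \<forall>n\<ge>N. rat_pabs p (f m - f n) < e"
    proof (intro exI[of _ N] allI impI)
      fix m n assume "m \<ge> N" "n \<ge> N"
      hence "sm p K (f m - f n)" using N by blast
      thus "rat_pabs p (f m - f n) < e" using sm_pabs_le[OF assms] K by (meson le_less_trans)
    qed
  qed
qed

lemma null_add:
  assumes "prime p" "null p f" "null p g"
  shows "null p (\<lambda>n. f n + g n)"
  unfolding null_def
proof
  fix K
  have a: "eventually (\<lambda>n. sm p K (f n)) sequentially" using assms(2) unfolding null_def by blast
  have b: "eventually (\<lambda>n. sm p K (g n)) sequentially" using assms(3) unfolding null_def by blast
  show "eventually (\<lambda>n. sm p K (f n + g n)) sequentially"
    by (rule eventually_elim2[OF a b]) (rule sm_add[OF assms(1)])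
qed

lemma null_neg:
  assumes "prime p"
  shows "null p (\<lambda>n. - f n) \<longleftrightarrow> null p f"
  unfolding null_def using sm_neg[OF assms] by simp

lemma null_cmult:
  assumes "prime p" "null p f"
  shows "null p (\<lambda>n. c * f n)"
proof (cases "c = 0")
  case True thus ?thesis by (simp add: null_def)
next
  case False
  show ?thesis unfolding null_def
  proof
    fix K
    have "eventually (\<lambda>n. sm p (K - rat_val p c) (f n)) sequentially"
      using assms(2) unfolding null_def by blast
    thus "eventually (\<lambda>n. sm p K (c * f n)) sequentially"
      by (rule eventually_mono) (rule sm_cmult[OF assms(1) False])
  qed
qed

lemma null_mult:
  assumes "prime p" "null p f" "null p g"
  shows "null p (\<lambda>n. f n * g n)"
  unfolding null_def
proof
  fix K
  have a: "eventually (\<lambda>n. sm p K (f n)) sequentially" using assms(2) unfolding null_def by blast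
  have b: "eventually (\<lambda>n. sm p 0 (g n)) sequentially" using assms(3) unfolding null_def by blast
  show "eventually (\<lambda>n. sm p K (f n * g n)) sequentially"
    by (rule eventually_elim2[OF a b]) (use sm_mult[OF assms(1), of K _ 0] in simp)
qed

lemma null_const: "null p (\<lambda>_. c) \<longleftrightarrow> c = 0"
proof
  assume "null p (\<lambda>_. c)"
  hence "\<And>K. sm p K c" unfolding null_def eventually_sequentially by blast
  thus "c = 0" by (rule sm_all_zero)
qed (simp add: null_def)

lemma null_cauchy:
  assumes "prime p" "null p (\<lambda>n. f n - r)"
  shows "pcauchy p f"
  unfolding cauchy_iff[OF assms(1)]
proof
  fix K
  obtain N where N: "\<forall>n\<ge>N. sm p K (f n - r)" using assms(2) unfolding null_def eventually_sequentially by blast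
  have "\<forall>m\<ge>N. \<forall>n\<ge>N. sm p K ((f m - r) - (f n - r))" using N sm_diff[OF assms(1)] by blast
  thus "\<exists>N. \<forall>m\<ge>N. \<forall>n\<ge>N. sm p K (f m - f n)" by auto
qed

lemma const_cauchy: "prime p \<Longrightarrow> pcauchy p (\<lambda>_. c)"
  by (rule null_cauchy[of p _ c]) (simp_all add: null_def)

lemma pequiv_iff:
  assumes "prime p"
  shows "(f, g) \<in> pequiv p \<longleftrightarrow> pcauchy p f \<and> pcauchy p g \<and> null p (\<lambda>n. f n - g n)"
  unfolding pequiv_def using null_iff[OF assms, of "\<lambda>n. f n - g n"] by simp

lemma equiv_pequiv:
  assumes "prime p"
  shows "equiv {f. pcauchy p f} (pequiv p)"
proof (rule equivI)
  show "pequiv p \<subseteq> {f. pcauchy p f} \<times> {f. pcauchy p f}"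
    unfolding pequiv_def by auto
  show "refl_on {f. pcauchy p f} (pequiv p)"
    unfolding refl_on_def pequiv_iff[OF assms] by (simp add: null_def)
  show "sym (pequiv p)"
  proof (rule symI)
    fix f g assume "(f, g) \<in> pequiv p"
    hence h: "pcauchy p f" "pcauchy p g" "null p (\<lambda>n. f n - g n)" using pequiv_iff[OF assms] by auto
    have "(\<lambda>n. g n - f n) = (\<lambda>n. - (f n - g n))" by auto
    hence "null p (\<lambda>n. g n - f n)" using h(3) null_neg[OF assms, of "\<lambda>n. f n - g n"] by simp
    thus "(g, f) \<in> pequiv p" using h pequiv_iff[OF assms] by auto
  qed
  show "trans (pequiv p)"
  proof (rule transI)
    fix f g h assume "(f, g) \<in> pequiv p" "(g, h) \<in> pequiv p"
    hence a: "pcauchy p f" "pcauchy p h" "null p (\<lambda>n. f n - g n)" "null p (\<lambda>n. g n - h n)"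
      using pequiv_iff[OF assms] by auto
    have "null p (\<lambda>n. (f n - g n) + (g n - h n))" by (rule null_add[OF assms a(3,4)])
    hence "null p (\<lambda>n. f n - h n)" by simp
    thus "(f, h) \<in> pequiv p" using a pequiv_iff[OF assms] by auto
  qed
qed

lemma qrep_cv:
  assumes "prime p"
  shows "null p (\<lambda>n. qrep (qof_rat p r) n - r)"
proof -
  have e: "equiv {f. pcauchy p f} (pequiv p)" by (rule equiv_pequiv[OF assms])
  have c: "(\<lambda>_. r) \<in> {f. pcauchy p f}" using const_cauchy[OF assms] by simp
  have "(\<lambda>_. r) \<in> qof_rat p r" unfolding qof_rat_def qcls_def by (rule equiv_class_self[OF e c])
  hence "qrep (qof_rat p r) \<in> qof_rat p r" unfolding qrep_def by (rule someI[where P="\<lambda>f. f \<in> qof_rat p r"])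
  hence "((\<lambda>_. r), qrep (qof_rat p r)) \<in> pequiv p" unfolding qof_rat_def qcls_def by simp
  hence "null p (\<lambda>n. r - qrep (qof_rat p r) n)" using pequiv_iff[OF assms] by auto
  thus ?thesis using null_neg[OF assms, of "\<lambda>n. r - qrep (qof_rat p r) n"] by simp
qed

lemma qcls_cv:
  assumes "prime p" "null p (\<lambda>n. f n - r)"
  shows "qcls p f = qof_rat p r"
  unfolding qof_rat_def qcls_def
  by (rule equiv_class_eq[OF equiv_pequiv[OF assms(1)]])
     (simp add: pequiv_iff[OF assms(1)] null_cauchy[OF assms] const_cauchy[OF assms(1)] assms(2))

lemma qof_rat_inj:
  assumes "prime p" "qof_rat p a = qof_rat p b"
  shows "a = b"
proof -
  have "((\<lambda>_. a), (\<lambda>_. b)) \<in> pequiv p"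
    using eq_equiv_class[OF assms(2)[unfolded qof_rat_def qcls_def] equiv_pequiv[OF assms(1)]]
      const_cauchy[OF assms(1)] by simp
  hence "null p (\<lambda>_. a - b)" using pequiv_iff[OF assms(1)] by auto
  thus ?thesis using null_const by simp
qed

lemma qof_rat_eq_iff:
  assumes "prime p" shows "qof_rat p a = qof_rat p b \<longleftrightarrow> a = b"
  using qof_rat_inj[OF assms, of a b] by auto

lemma qof_rat_Qp: "prime p \<Longrightarrow> qof_rat p r \<in> Qp p"
  unfolding Qp_def qof_rat_def qcls_def by (rule quotientI) (simp add: const_cauchy)

lemma qadd_rat:
  assumes "prime p"
  shows "qadd p (qof_rat p a) (qof_rat p b) = qof_rat p (a + b)"
  unfolding qadd_def
proof (rule qcls_cv[OF assms])
  have "null p (\<lambda>n. (qrep (qof_rat p a) n - a) + (qrep (qof_rat p b) n - b))"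
    by (rule null_add[OF assms qrep_cv[OF assms] qrep_cv[OF assms]])
  thus "null p (\<lambda>n. qrep (qof_rat p a) n + qrep (qof_rat p b) n - (a + b))"
    by (simp add: algebra_simps)
qed

lemma qneg_rat:
  assumes "prime p"
  shows "qneg p (qof_rat p a) = qof_rat p (- a)"
  unfolding qneg_def
proof (rule qcls_cv[OF assms])
  have "null p (\<lambda>n. - (qrep (qof_rat p a) n - a))"
    using null_neg[OF assms, of "\<lambda>n. qrep (qof_rat p a) n - a"] qrep_cv[OF assms] by simp
  thus "null p (\<lambda>n. - qrep (qof_rat p a) n - - a)"
    by (simp add: algebra_simps)
qed

lemma qsub_rat:
  assumes "prime p"
  shows "qsub p (qof_rat p a) (qof_rat p b) = qof_rat p (a - b)"
  unfolding qsub_def qneg_rat[OF assms] qadd_rat[OF assms] by simp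

lemma qmul_rat:
  assumes "prime p"
  shows "qmul p (qof_rat p a) (qof_rat p b) = qof_rat p (a * b)"
  unfolding qmul_def
proof (rule qcls_cv[OF assms])
  let ?f = "qrep (qof_rat p a)" and ?g = "qrep (qof_rat p b)"
  have f: "null p (\<lambda>n. ?f n - a)" and g: "null p (\<lambda>n. ?g n - b)" using qrep_cv[OF assms] by auto
  have "null p (\<lambda>n. (?f n - a) * (?g n - b) + (b * (?f n - a) + a * (?g n - b)))"
    by (intro null_add[OF assms] null_mult[OF assms] null_cmult[OF assms] f g)
  thus "null p (\<lambda>n. ?f n * ?g n - a * b)"
    by (simp add: algebra_simps)
qed

lemma qinv_rat:
  assumes "prime p" "a \<noteq> 0"
  shows "qinv p (qof_rat p a) = qof_rat p (inverse a)"
  unfolding qinv_def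
proof (rule qcls_cv[OF assms(1)])
  let ?f = "qrep (qof_rat p a)"
  have f: "null p (\<lambda>n. ?f n - a)" using qrep_cv[OF assms(1)] by auto
  show "null p (\<lambda>n. inverse (?f n) - inverse a)" unfolding null_def
  proof
    fix K
    let ?v = "rat_val p a"
    have e1: "eventually (\<lambda>n. sm p (K + 2 * ?v) (?f n - a)) sequentially" using f unfolding null_def by blast
    have e2: "eventually (\<lambda>n. sm p (?v + 1) (?f n - a)) sequentially" using f unfolding null_def by blast
    show "eventually (\<lambda>n. sm p K (inverse (?f n) - inverse a)) sequentially"
    proof (rule eventually_elim2[OF e1 e2])
      fix n assume h1: "sm p (K + 2 * ?v) (?f n - a)" and h2: "sm p (?v + 1) (?f n - a)"
      have x: "?f n \<noteq> 0" "rat_val p (?f n) = ?v" using rat_val_perturb[OF assms(1,2) h2] by auto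
      have s1: "sm p (K + 2 * ?v) (- (?f n - a))" using sm_neg[OF assms(1), of "K + 2 * ?v" "?f n - a"] h1 by simp
      have s2: "sm p (- ?v) (inverse (?f n))"
        using rat_val_inverse[OF assms(1) x(1)] x unfolding sm_def by simp
      have s3: "sm p (- ?v) (inverse a)"
        using rat_val_inverse[OF assms(1,2)] unfolding sm_def by simp
      have "sm p ((K + 2 * ?v) + (- ?v) + (- ?v)) ((- (?f n - a)) * inverse (?f n) * inverse a)"
        by (intro sm_mult[OF assms(1)] s1 s2 s3)
      moreover have "(- (?f n - a)) * inverse (?f n) * inverse a = inverse (?f n) - inverse a"
        using x(1) assms(2) by (simp add: field_simps)
      ultimately show "sm p K (inverse (?f n) - inverse a)" by simp
    qed
  qed
qed

lemma qdiv_rat: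
  assumes "prime p" "b \<noteq> 0"
  shows "qdiv p (qof_rat p a) (qof_rat p b) = qof_rat p (a / b)"
  unfolding qdiv_def qinv_rat[OF assms] qmul_rat[OF assms(1)] by (simp add: divide_inverse)

lemma qpow_rat:
  assumes "prime p"
  shows "qpow p (qof_rat p a) n = qof_rat p (a ^ n)"
proof (induction n)
  case 0 thus ?case by (simp add: qpow_def qone_def)
next
  case (Suc n)
  have "qpow p (qof_rat p a) (Suc n) = qmul p (qof_rat p a) (qpow p (qof_rat p a) n)"
    by (simp add: qpow_def)
  thus ?case using Suc qmul_rat[OF assms] by simp
qed

lemma qpowi_rat:
  assumes "prime p" "a \<noteq> 0"
  shows "qpowi p (qof_rat p a) k = qof_rat p (a powi k)"
proof (cases "k \<ge> 0")
  case True thus ?thesis by (simp add: qpowi_def qpow_rat[OF assms(1)] power_int_def)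
next
  case False
  have "a ^ nat (- k) \<noteq> 0" using assms by simp
  thus ?thesis using False
    by (simp add: qpowi_def qpow_rat[OF assms(1)] qinv_rat[OF assms(1)] power_int_def power_inverse)
qed

lemma ev_exists: "eventually P sequentially \<Longrightarrow> \<exists>n. P n"
  unfolding eventually_sequentially by blast

lemma qval_rat:
  assumes "prime p" "r \<noteq> 0"
  shows "qval p (qof_rat p r) = rat_val p r"
proof -
  let ?f = "qrep (qof_rat p r)"
  have f: "null p (\<lambda>n. ?f n - r)" using qrep_cv[OF assms(1)] by auto
  have ev: "eventually (\<lambda>n. rat_val p (?f n) = rat_val p r) sequentially"
  proof -
    have "eventually (\<lambda>n. sm p (rat_val p r + 1) (?f n - r)) sequentially" using f unfolding null_def by blast
    thus ?thesis by (rule eventually_mono) (use rat_val_perturb[OF assms] in blast)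
  qed
  show ?thesis unfolding qval_def
  proof (rule the_equality)
    fix v assume a: "eventually (\<lambda>n. rat_val p (?f n) = v) sequentially"
    have "eventually (\<lambda>n. rat_val p (?f n) = v \<and> rat_val p (?f n) = rat_val p r) sequentially"
      by (rule eventually_conj[OF a ev])
    hence "\<exists>n. rat_val p (?f n) = v \<and> rat_val p (?f n) = rat_val p r" by (rule ev_exists)
    thus "v = rat_val p r" by auto
  qed (rule ev)
qed




lemma rat_res_eqI:
  assumes "prime p" "x = of_int c / of_int d" "d \<noteq> 0" "\<not> int p dvd d"
    "0 \<le> z" "z < int p" "[c = z * d] (mod int p)"
  shows "rat_res p x = z"
proof -
  obtain c0 d0 where q: "quotient_of x = (c0, d0)" by (cases "quotient_of x")
  have x0: "x = of_int c0 / of_int d0" by (rule quotient_of_div[OF q])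
  have d0: "d0 > 0" using quotient_of_denom_pos[OF q] .
  have cop: "coprime c0 d0" using quotient_of_coprime[OF q] .
  have "of_int c * of_int d0 = (of_int c0 * of_int d :: rat)"
    using assms(2,3) x0 d0 by (simp add: field_simps)
  hence eq: "c * d0 = c0 * d" by (metis of_int_eq_iff of_int_mult)
  have pi: "prime (int p)" using assms(1) by simp
  have nd0: "\<not> int p dvd d0"
  proof
    assume h: "int p dvd d0"
    hence "int p dvd c * d0" by simp
    hence "int p dvd c0 * d" using eq by simp
    hence "int p dvd c0" using assms(4) pi prime_dvd_mult_iff by blast
    with h cop show False using pi by (metis coprime_common_divisor not_prime_unit)
  qed
  have "int p dvd c - z*d" using assms(7) by (simp add: cong_iff_dvd_diff)
  hence "int p dvd (c - z*d) * d0" by simp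
  moreover have "(c - z*d) * d0 = (c0 - z*d0) * d" using eq by (simp add: algebra_simps)
  ultimately have "int p dvd (c0 - z*d0) * d" by simp
  hence "int p dvd c0 - z*d0" using pi assms(4) prime_dvd_mult_iff by blast
  hence cz: "[c0 = z*d0] (mod int p)" by (simp add: cong_iff_dvd_diff)
  have "(THE z'. 0 \<le> z' \<and> z' < int p \<and> [c0 = z' * d0] (mod int p)) = z"
  proof (rule the_equality)
    show "0 \<le> z \<and> z < int p \<and> [c0 = z * d0] (mod int p)" using assms cz by simp
  next
    fix z' assume h: "0 \<le> z' \<and> z' < int p \<and> [c0 = z' * d0] (mod int p)"
    hence "int p dvd c0 - z'*d0" by (simp add: cong_iff_dvd_diff)
    hence "int p dvd (c0 - z'*d0) - (c0 - z*d0)" using \<open>int p dvd c0 - z*d0\<close> by (rule dvd_diff)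
    moreover have "(c0 - z'*d0) - (c0 - z*d0) = (z - z') * d0" by (simp add: algebra_simps)
    ultimately have "int p dvd (z - z') * d0" by simp
    hence "int p dvd z - z'" using pi nd0 prime_dvd_mult_iff by blast
    hence "[z = z'] (mod int p)" by (simp add: cong_iff_dvd_diff)
    thus "z' = z" using h assms(5,6) cong_less_imp_eq_int by metis
  qed
  thus ?thesis by (simp add: rat_res_def q)
qed

lemma rat_res_near:
  assumes "prime p" "w = of_int a / of_int b" "b \<noteq> 0" "\<not> int p dvd a" "\<not> int p dvd b"
    "0 \<le> z" "z < int p" "[a = z * b] (mod int p)" "sm p 1 (x - w)"
  shows "rat_res p x = z"
proof -
  have pe: "prime_elem (int p)" using assms(1) by simp
  have pi: "prime (int p)" using assms(1) by simp
  let ?m = "multiplicity (int p)"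
  have a0: "a \<noteq> 0" using assms(4) by auto
  have w0: "w \<noteq> 0" using assms(2,3) a0 by simp
  have ma: "?m a = 0" and mb: "?m b = 0" using assms(4,5) not_dvd_imp_multiplicity_0 by auto
  have vw: "rat_val p w = 0" unfolding assms(2) using rat_val_frac[OF assms(1) a0 assms(3)] ma mb by simp
  have "x \<noteq> 0 \<and> rat_val p x = rat_val p w"
    by (rule rat_val_perturb[OF assms(1) w0]) (use assms(9) vw in simp)
  hence x0: "x \<noteq> 0" and vx: "rat_val p x = 0" using vw by auto
  obtain c d where q: "quotient_of x = (c, d)" by (cases "quotient_of x")
  have xcd: "x = of_int c / of_int d" by (rule quotient_of_div[OF q])
  have d0: "d > 0" using quotient_of_denom_pos[OF q] .
  have cop: "coprime c d" using quotient_of_coprime[OF q] .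
  have c0: "c \<noteq> 0" using x0 xcd by auto
  have "rat_val p x = int (?m c) - int (?m d)" unfolding xcd by (rule rat_val_frac[OF assms(1) c0]) (use d0 in simp)
  hence mcd: "?m c = ?m d" using vx by simp
  have nd: "\<not> int p dvd d"
  proof
    assume h: "int p dvd d"
    have "\<not> is_unit (int p)" using p_ndvd_1[OF assms(1)] by simp
    hence "?m d > 0" using h d0 multiplicity_gt_zero_iff by (metis less_numeral_extra(3))
    hence "?m c > 0" using mcd by simp
    hence "int p dvd c" using not_dvd_imp_multiplicity_0 by (metis less_numeral_extra(3))
    with h cop show False using pi by (metis coprime_common_divisor not_prime_unit)
  qed
  have dv: "int p dvd c*b - a*d"
  proof (cases "c*b - a*d = 0")
    case True thus ?thesis by simp
  next
    case False
    have md: "?m d = 0" using nd not_dvd_imp_multiplicity_0 by auto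
    have e: "x - w = of_int (c*b - a*d) / of_int (d*b)" unfolding xcd assms(2)
      using d0 assms(3) by (simp add: field_simps)
    have xw0: "x - w \<noteq> 0"
    proof
      assume h0: "x - w = 0"
      have "(of_int (c*b - a*d) :: rat) / of_int (d*b) = 0" using e h0 by metis
      hence "(of_int (c*b - a*d) :: rat) = 0" using d0 assms(3)
        by (auto simp only: divide_eq_0_iff of_int_eq_0_iff mult_eq_0_iff)
      thus False using False by (simp only: of_int_eq_0_iff)
    qed
    have "rat_val p (x - w) = int (?m (c*b - a*d)) - int (?m (d*b))"
      unfolding e by (rule rat_val_frac[OF assms(1) False]) (use d0 assms(3) in simp)
    moreover have "?m (d*b) = 0" using prime_elem_multiplicity_mult_distrib[OF pe, of d b] md mb d0 assms(3) by simp
    moreover have "rat_val p (x - w) \<ge> 1" using assms(9) xw0 unfolding sm_def by simp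
    ultimately have "?m (c*b - a*d) > 0" by simp
    thus ?thesis using not_dvd_imp_multiplicity_0 by (metis less_numeral_extra(3))
  qed
  have "int p dvd a - z*b" using assms(8) by (simp add: cong_iff_dvd_diff)
  hence "int p dvd (c*b - a*d) + (a - z*b) * d" using dv by simp
  moreover have "(c*b - a*d) + (a - z*b) * d = (c - z*d) * b" by (simp add: algebra_simps)
  ultimately have "int p dvd (c - z*d) * b" by simp
  hence "int p dvd c - z*d" using pi assms(5) prime_dvd_mult_iff by blast
  hence "[c = z*d] (mod int p)" by (simp add: cong_iff_dvd_diff)
  thus ?thesis using rat_res_eqI[OF assms(1) xcd _ nd assms(6,7)] d0 by simp
qed

lemma omega_rat:
  assumes "prime p" "r = of_int a / of_int b" "b \<noteq> 0" "\<not> int p dvd a" "\<not> int p dvd b"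
    "0 \<le> z" "z < int p" "[a = z * b] (mod int p)"
  shows "omega p (qof_rat p r) = z"
proof -
  have a0: "a \<noteq> 0" using assms(4) by auto
  have r0: "r \<noteq> 0" using assms(2,3) a0 by simp
  have ma: "multiplicity (int p) a = 0" and mb: "multiplicity (int p) b = 0"
    using assms(4,5) not_dvd_imp_multiplicity_0 by auto
  have vr: "rat_val p r = 0" unfolding assms(2) using rat_val_frac[OF assms(1) a0 assms(3)] ma mb by simp
  have U: "qmul p (qof_rat p r) (qof_rat p (of_nat p powi (- qval p (qof_rat p r)))) = qof_rat p r"
    using qval_rat[OF assms(1) r0] vr qmul_rat[OF assms(1)] by simp
  let ?f = "qrep (qof_rat p r)"
  have f: "null p (\<lambda>n. ?f n - r)" using qrep_cv[OF assms(1)] by auto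
  have ev: "eventually (\<lambda>n. rat_res p (?f n) = z) sequentially"
  proof -
    have "eventually (\<lambda>n. sm p 1 (?f n - r)) sequentially" using f unfolding null_def by blast
    thus ?thesis by (rule eventually_mono) (rule rat_res_near[OF assms])
  qed
  have "(THE z'. eventually (\<lambda>n. rat_res p (?f n) = z') sequentially) = z"
  proof (rule the_equality)
    fix v assume a: "eventually (\<lambda>n. rat_res p (?f n) = v) sequentially"
    have "eventually (\<lambda>n. rat_res p (?f n) = v \<and> rat_res p (?f n) = z) sequentially"
      by (rule eventually_conj[OF a ev])
    hence "\<exists>n. rat_res p (?f n) = v \<and> rat_res p (?f n) = z" by (rule ev_exists)
    thus "v = z" by auto
  qed (rule ev)
  thus ?thesis unfolding omega_def Let_def U .
qed

lemma hilbert_rat: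
  assumes "prime p" "a \<noteq> 0" "b \<noteq> 0"
    "(-1) powi (rat_val p a * rat_val p b) * b powi (rat_val p a) / a powi (rat_val p b) = of_int c / of_int d"
    "d \<noteq> 0" "\<not> int p dvd c" "\<not> int p dvd d" "0 \<le> z" "z < int p" "[c = z * d] (mod int p)"
  shows "hilbert p (qof_rat p a) (qof_rat p b) = (if (z ^ ((p - 1) div 2)) mod int p = 1 then 1 else -1)"
proof -
  have 1: "qpowi p (qof_rat p (-1)) k = qof_rat p ((-1) powi k)" for k
    using qpowi_rat[OF assms(1), of "-1"] by simp
  have 2: "qpowi p (qof_rat p b) k = qof_rat p (b powi k)" for k
    using qpowi_rat[OF assms(1,3)] by simp
  have 3: "qpowi p (qof_rat p a) k = qof_rat p (a powi k)" for k
    using qpowi_rat[OF assms(1,2)] by simp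
  have 4: "qdiv p (qof_rat p y) (qof_rat p (a powi k)) = qof_rat p (y / a powi k)" for y k
    using qdiv_rat[OF assms(1)] assms(2) by simp
  have om: "omega p (qof_rat p (of_int c / of_int d)) = z"
    by (rule omega_rat[OF assms(1) refl assms(5-10)])
  show ?thesis
    unfolding hilbert_def Let_def qval_rat[OF assms(1,2)] qval_rat[OF assms(1,3)] 1 2 3
      qmul_rat[OF assms(1)] 4 assms(4) om ..
qed

lemma hilbert_val0:
  assumes "prime p" "a \<noteq> 0" "b \<noteq> 0"
    "(-1) powi (rat_val p a * rat_val p b) * b powi (rat_val p a) / a powi (rat_val p b) = 1"
  shows "hilbert p (qof_rat p a) (qof_rat p b) = 1"
proof -
  have p1: "int p > 1" using prime_gt_1_nat[OF assms(1)] by simp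
  have "hilbert p (qof_rat p a) (qof_rat p b) = (if (1 ^ ((p - 1) div 2)) mod int p = 1 then 1 else -1)"
  proof (rule hilbert_rat[OF assms(1-3), where c=1 and d=1 and z=1])
    show "(-1) powi (rat_val p a * rat_val p b) * b powi (rat_val p a) / a powi (rat_val p b) = of_int 1 / of_int 1"
      by (simp only: assms(4))
  qed (use p1 p_ndvd_1[OF assms(1)] in auto)
  thus ?thesis using p1 by simp
qed

lemma hilbert_one_left:
  assumes "prime p" "b \<noteq> 0"
  shows "hilbert p (qof_rat p 1) (qof_rat p b) = 1"
proof -
  have "(-1) powi (rat_val p 1 * rat_val p b) * b powi (rat_val p 1) / 1 powi (rat_val p b) = (1::rat)"
    by (simp add: rat_val_one[OF assms(1)])
  thus ?thesis using hilbert_val0[OF assms(1), of 1 b] assms(2) by simp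
qed

lemma hilbert_one_right:
  assumes "prime p" "a \<noteq> 0"
  shows "hilbert p (qof_rat p a) (qof_rat p 1) = 1"
proof -
  have "(-1) powi (rat_val p a * rat_val p 1) * 1 powi (rat_val p a) / a powi (rat_val p 1) = (1::rat)"
    by (simp add: rat_val_one[OF assms(1)])
  thus ?thesis using hilbert_val0[OF assms(1), of a 1] assms(2) by simp
qed

lemma hilbert_same_unit:
  assumes "prime p" "s \<noteq> 0" "rat_val p s = 0"
  shows "hilbert p (qof_rat p s) (qof_rat p s) = 1"
proof -
  have "(-1) powi (rat_val p s * rat_val p s) * s powi (rat_val p s) / s powi (rat_val p s) = (1::rat)"
    by (simp add: assms(3))
  thus ?thesis using hilbert_val0[OF assms(1), of s s] assms(2) by simp
qed

lemma hilbert_special: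
  assumes "prime p" "G \<noteq> 0" "\<not> int p dvd G"
  shows "hilbert p (qof_rat p (1 / of_int G)) (qof_rat p (of_nat p * (1 / of_int G)))
         = (if ((G mod int p) ^ ((p - 1) div 2)) mod int p = 1 then 1 else -1)"
proof -
  have p0: "p \<noteq> 0" using prime_gt_0_nat[OF assms(1)] by simp
  have vs: "rat_val p (1 / of_int G) = 0"
    using rat_val_inverse[OF assms(1), of "of_int G"] rat_val_int[OF assms(1,3)] assms(2)
    by (simp add: divide_inverse)
  have vp: "rat_val p (of_nat p) = 1" using rat_val_ppow_nat[OF assms(1), of 1] by simp
  have vps: "rat_val p (of_nat p * (1 / of_int G)) = 1"
    using rat_val_mult[OF assms(1), of "of_nat p" "1 / of_int G"] vs vp p0 assms(2) by simp
  have pp: "int p > 0" using p0 by simp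
  show ?thesis
  proof (rule hilbert_rat[OF assms(1), of _ _ G 1])
    show "(-1) powi (rat_val p (1 / of_int G) * rat_val p (of_nat p * (1 / of_int G))) *
      (of_nat p * (1 / of_int G)) powi rat_val p (1 / of_int G) / (1 / of_int G) powi rat_val p (of_nat p * (1 / of_int G))
      = (of_int G / of_int 1 :: rat)" using vs vps assms(2) by (simp add: field_simps)
    show "[G = G mod int p * 1] (mod int p)" by (simp add: cong_def)
  qed (use assms p0 pp p_ndvd_1[OF assms(1)] in auto)
qed


section \<open>Matrices with rational entries\<close>

definition phi :: "nat \<Rightarrow> rat \<times> rat \<times> rat \<times> rat \<Rightarrow> mat2" where
  "phi p A = (case A of (a, b, c, d) \<Rightarrow> (qof_rat p a, qof_rat p b, qof_rat p c, qof_rat p d))"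

definition rmul :: "rat \<times> rat \<times> rat \<times> rat \<Rightarrow> rat \<times> rat \<times> rat \<times> rat \<Rightarrow> rat \<times> rat \<times> rat \<times> rat" where
  "rmul A B = (case A of (a, b, c, d) \<Rightarrow> case B of (a', b', c', d') \<Rightarrow>
     (a*a' + b*c', a*b' + b*d', c*a' + d*c', c*b' + d*d'))"

definition rdet :: "rat \<times> rat \<times> rat \<times> rat \<Rightarrow> rat" where
  "rdet A = (case A of (a, b, c, d) \<Rightarrow> a*d - b*c)"

definition rc :: "rat \<times> rat \<times> rat \<times> rat \<Rightarrow> rat" where
  "rc A = (case A of (a, b, c, d) \<Rightarrow> if c \<noteq> 0 then c else d)"

lemma rmul_simp: "rmul (a, b, c, d) (a', b', c', d') = (a*a' + b*c', a*b' + b*d', c*a' + d*c', c*b' + d*d')"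
  by (simp add: rmul_def)

lemma rdet_simp: "rdet (a, b, c, d) = a*d - b*c"
  by (simp add: rdet_def)

lemma rc_c: "c \<noteq> 0 \<Longrightarrow> rc (a, b, c, d) = c"
  by (simp add: rc_def)

lemma rc_d: "rc (a, b, 0, d) = d"
  by (simp add: rc_def)

lemma rdet_rmul: "rdet (rmul A B) = rdet A * rdet B"
  by (cases A rule: prod_cases4; cases B rule: prod_cases4) (simp add: rdet_def rmul_def algebra_simps)

lemma rc_nz: "rdet A \<noteq> 0 \<Longrightarrow> rc A \<noteq> 0"
  by (cases A rule: prod_cases4) (auto simp: rdet_def rc_def)

lemma mmul_phi:
  assumes "prime p"
  shows "mmul p (phi p A) (phi p B) = phi p (rmul A B)"
  by (cases A rule: prod_cases4; cases B rule: prod_cases4)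
     (simp add: mmul_def phi_def rmul_def qmul_rat[OF assms] qadd_rat[OF assms])

lemma mdet_phi:
  assumes "prime p"
  shows "mdet p (phi p A) = qof_rat p (rdet A)"
  by (cases A rule: prod_cases4) (simp add: mdet_def phi_def rdet_def qmul_rat[OF assms] qsub_rat[OF assms])

lemma cfun_phi:
  assumes "prime p"
  shows "cfun p (phi p A) = qof_rat p (rc A)"
  by (cases A rule: prod_cases4) (simp add: cfun_def phi_def rc_def qzero_def qof_rat_eq_iff[OF assms])

lemma GL2_phi:
  assumes "prime p" "rdet A \<noteq> 0"
  shows "phi p A \<in> GL2 p"
proof -
  obtain a b c d where A: "A = (a, b, c, d)" by (cases A rule: prod_cases4)
  have d: "mdet p (phi p A) \<noteq> qzero p"
    unfolding mdet_phi[OF assms(1)] qzero_def qof_rat_eq_iff[OF assms(1)] by (rule assms(2))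
  have e: "phi p A = (qof_rat p a, qof_rat p b, qof_rat p c, qof_rat p d)"
    unfolding A phi_def by simp
  show ?thesis unfolding GL2_def using d qof_rat_Qp[OF assms(1)] unfolding e by blast
qed

lemma Gt_phi:
  assumes "prime p" "rdet A \<noteq> 0" "s = 1 \<or> s = -1"
  shows "(phi p A, s) \<in> Gt p"
  using GL2_phi[OF assms(1,2)] assms(3) unfolding Gt_def by auto

lemma gt_mult_phi:
  assumes "prime p" "rc A \<noteq> 0" "rc B \<noteq> 0"
  shows "gt_mult p (phi p A, s) (phi p B, t) =
    (phi p (rmul A B), s * t * hilbert p (qof_rat p (rc (rmul A B) / rc A))
                                        (qof_rat p (rdet A * rc (rmul A B) / rc B)))"
proof -
  have 1: "mmul p (phi p A) (phi p B) = phi p (rmul A B)" by (rule mmul_phi[OF assms(1)])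
  have 2: "Defs.sigma p (phi p A) (phi p B) = hilbert p (qof_rat p (rc (rmul A B) / rc A))
                                        (qof_rat p (rdet A * rc (rmul A B) / rc B))"
    unfolding sigma_def 1 cfun_phi[OF assms(1)] mdet_phi[OF assms(1)] qmul_rat[OF assms(1)]
      qdiv_rat[OF assms(1) assms(2)] qdiv_rat[OF assms(1) assms(3)] ..
  show ?thesis by (simp add: gt_mult_def 1 2)
qed

lemma mone_phi: "mone p = phi p (1, 0, 0, 1)"
  by (simp add: mone_def phi_def qone_def qzero_def)

lemma gt_one_phi: "gt_one p = (phi p (1, 0, 0, 1), 1)"
  by (simp add: gt_one_def mone_phi)

lemma vge_rat:
  assumes "prime p" "sm p (int n) r"
  shows "vge p (qof_rat p r) n"
proof (cases "r = 0")
  case True thus ?thesis by (simp add: vge_def qzero_def)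
next
  case False thus ?thesis using assms qval_rat[OF assms(1) False] by (simp add: vge_def sm_def)
qed

lemma Kn_phi:
  assumes "prime p" "rdet (a, b, c, d) \<noteq> 0" "sm p (int n) (a - 1)" "sm p (int n) b"
    "sm p (int n) c" "sm p (int n) (d - 1)"
  shows "phi p (a, b, c, d) \<in> Kn p n"
proof -
  have e: "phi p (a, b, c, d) = (qof_rat p a, qof_rat p b, qof_rat p c, qof_rat p d)"
    by (simp add: phi_def)
  have G: "(qof_rat p a, qof_rat p b, qof_rat p c, qof_rat p d) \<in> GL2 p"
    using GL2_phi[OF assms(1,2)] unfolding e .
  have v1: "vge p (qsub p (qof_rat p a) (qone p)) n"
    unfolding qone_def qsub_rat[OF assms(1)] by (rule vge_rat[OF assms(1,3)])
  have v4: "vge p (qsub p (qof_rat p d) (qone p)) n"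
    unfolding qone_def qsub_rat[OF assms(1)] by (rule vge_rat[OF assms(1,6)])
  have v2: "vge p (qof_rat p b) n" by (rule vge_rat[OF assms(1,4)])
  have v3: "vge p (qof_rat p c) n" by (rule vge_rat[OF assms(1,5)])
  show ?thesis unfolding e Kn_def using G v1 v2 v3 v4 by simp
qed

lemma vge_mono: "vge p x m \<Longrightarrow> n \<le> m \<Longrightarrow> vge p x n"
  unfolding vge_def by auto

lemma Kn_mono:
  assumes "n \<le> m"
  shows "Kn p m \<subseteq> Kn p n"
proof
  fix g assume g: "g \<in> Kn p m"
  obtain a b c d where gg: "g = (a, b, c, d)" by (cases g rule: prod_cases4)
  have h: "(a, b, c, d) \<in> GL2 p \<and> vge p (qsub p a (qone p)) m \<and> vge p b m \<and> vge p c m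
      \<and> vge p (qsub p d (qone p)) m" using g unfolding gg Kn_def by simp
  hence "(a, b, c, d) \<in> GL2 p \<and> vge p (qsub p a (qone p)) n \<and> vge p b n \<and> vge p c n
      \<and> vge p (qsub p d (qone p)) n" using vge_mono[OF _ assms] by blast
  thus "g \<in> Kn p n" unfolding gg Kn_def by simp
qed

lemma hilbert_pm: "hilbert p x y = 1 \<or> hilbert p x y = -1"
  unfolding hilbert_def Let_def by auto

lemma mat_axis:
  fixes A :: "'a::field ^'n ^'n"
  assumes "\<And>i. A *v axis i 1 = axis i 1"
  shows "A = mat 1"
proof -
  have e: "(A *v axis j 1) $ i = A $ i $ j" for i j
    by (simp add: matrix_vector_mult_def axis_def if_distrib if_distribR sum.delta'[OF finite] cong: if_cong)
  show ?thesis
  proof (subst vec_eq_iff, intro allI, subst vec_eq_iff, intro allI)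
    fix i j
    have "A $ i $ j = axis j (1::'a) $ i" using e[of j i] assms[of j] by simp
    thus "A $ i $ j = mat 1 $ i $ j" by (simp add: mat_def axis_def)
  qed
qed

theorem lemma4p5:
  fixes p :: nat
  assumes "prime p" and "odd p"
    and "CHAR('k::alg_closed_field) = p"
  shows "\<not> (\<exists>\<rho> :: mat2 \<times> int \<Rightarrow> 'k ^'n::finite ^'n.
              is_rep p \<rho> \<and> is_smooth p \<rho> \<and> is_genuine p \<rho>)"
proof
  assume "\<exists>\<rho> :: mat2 \<times> int \<Rightarrow> 'k ^'n::finite ^'n. is_rep p \<rho> \<and> is_smooth p \<rho> \<and> is_genuine p \<rho>"
  then obtain \<rho> :: "mat2 \<times> int \<Rightarrow> 'k ^'n ^'n"
    where rep: "is_rep p \<rho>" and smo: "is_smooth p \<rho>" and gen: "is_genuine p \<rho>" by blast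
  have pp: "prime p" by (rule assms(1))
  have p2: "p \<ge> 2" using prime_ge_2_nat[OF pp] .
  have p3: "p \<ge> 3" using p2 assms(2) by (cases "p = 2") auto
  have one: "\<rho> (gt_one p) = mat 1" using rep unfolding is_rep_def by blast
  have mult: "\<And>a b. a \<in> Gt p \<Longrightarrow> b \<in> Gt p \<Longrightarrow> \<rho> (gt_mult p a b) = \<rho> a ** \<rho> b"
    using rep unfolding is_rep_def by blast
  have neg: "\<rho> (phi p (1, 0, 0, 1), -1) = - mat 1" using gen unfolding is_genuine_def mone_phi .
  have two: "(2::'k) \<noteq> 0"
  proof
    assume "(2::'k) = 0"
    hence "of_nat 2 = (0::'k)" by simp
    hence "CHAR('k) dvd 2" by (simp only: of_nat_eq_0_iff_char_dvd)
    hence "p dvd 2" using assms(3) by simp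
    hence "p \<le> 2" by (rule dvd_imp_le) simp
    thus False using p3 by simp
  qed

  have "\<forall>i::'n. \<exists>n. \<forall>g\<in>Kn p n. \<rho> (g, 1) *v axis i (1::'k) = axis i 1"
    using smo unfolding is_smooth_def by blast
  then obtain nf where nf: "\<And>i::'n. \<forall>g\<in>Kn p (nf i). \<rho> (g, 1) *v axis i (1::'k) = axis i 1" by metis
  define N where "N = Max (range nf)"
  have KN: "\<rho> (g, 1) = mat 1" if g: "g \<in> Kn p N" for g
  proof (rule mat_axis)
    fix i :: 'n
    have "nf i \<le> N" unfolding N_def by (rule Max_ge) auto
    hence "g \<in> Kn p (nf i)" using Kn_mono g by blast
    thus "\<rho> (g, 1) *v axis i 1 = axis i 1" using nf by blast
  qed

  obtain g0 where g0: "residue_primroot p g0" using prime_primitive_root_exists[of p] pp prime_gt_1_nat[OF pp] by blast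
  have cop: "coprime p g0" and ordg: "ord p g0 = p - 1"
    using g0 totient_prime[OF pp] unfolding residue_primroot_def by auto
  define G :: int where "G = int g0"
  have g00: "g0 \<noteq> 0"
  proof
    assume "g0 = 0"
    hence "p = 1" using cop by simp
    thus False using p2 by simp
  qed
  have G1: "G \<ge> 1" using g00 unfolding G_def by simp
  have Gnd: "\<not> int p dvd G"
  proof
    assume "int p dvd G"
    hence "p dvd g0" unfolding G_def by simp
    hence "is_unit p" by (rule coprime_common_divisor[OF cop dvd_refl])
    thus False using p2 by simp
  qed
  have Gpow: "((G mod int p) ^ ((p - 1) div 2)) mod int p \<noteq> 1"
  proof
    let ?k = "(p - 1) div 2"
    assume h: "((G mod int p) ^ ?k) mod int p = 1"
    have "(G ^ ?k) mod int p = 1" using h by (simp add: power_mod)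
    hence "[G ^ ?k = 1] (mod int p)" using p2 by (simp add: cong_def)
    hence "[int (g0 ^ ?k) = int 1] (mod int p)" unfolding G_def by simp
    hence "[g0 ^ ?k = 1] (mod p)" by (simp only: cong_int_iff)
    hence "ord p g0 dvd ?k" by (rule iffD1[OF ord_divides])
    hence d: "(p - 1) dvd ?k" using ordg by simp
    have k0: "0 < ?k" using p3 by simp
    have k1: "?k < p - 1" using p3 by simp
    have "p - 1 \<le> ?k" by (rule dvd_imp_le[OF d k0])
    thus False using k1 by simp
  qed

  define P :: rat where "P = of_nat p"
  define y :: rat where "y = P ^ N"
  define s :: rat where "s = 1 / of_int G"
  define lam :: rat where "lam = (P - 1) * of_int G"
  define x :: rat where "x = (s - 2 - lam) / y"
  define de :: rat where "de = x / y"
  have P3: "P \<ge> 3" unfolding P_def using p3 by (metis of_nat_le_iff of_nat_numeral)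
  have P0: "P \<noteq> 0" using P3 by simp
  have y0: "y > 0" unfolding y_def using P3 by simp
  have Gr: "(of_int G :: rat) \<ge> 1" using G1 by simp
  have s0: "s > 0" "s \<le> 1" unfolding s_def using Gr by auto
  have lam2: "lam \<ge> 2"
  proof -
    have "(P - 1) * of_int G \<ge> 2 * 1" by (rule mult_mono) (use P3 Gr in auto)
    thus ?thesis unfolding lam_def by simp
  qed
  have xy: "x * y = s - 2 - lam" unfolding x_def using y0 by simp
  have x0: "x \<noteq> 0" using xy s0 lam2 by auto
  have de0: "de \<noteq> 0" unfolding de_def using x0 y0 by simp
  have dey: "de * y = x" unfolding de_def using y0 by simp
  have slam: "s * lam = P - 1" unfolding s_def lam_def using Gr by simp
  have sne: "s \<noteq> 0" using s0 by simp
  have sval: "rat_val p s = 0"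
    using rat_val_inverse[OF pp, of "of_int G"] rat_val_int[OF pp Gnd] G1
    by (simp add: s_def divide_inverse)
  have ysm: "sm p (int N) y"
    using rat_val_ppow_nat[OF pp, of N] unfolding y_def P_def sm_def by simp
  have Hsp: "hilbert p (qof_rat p s) (qof_rat p (P * s)) = -1"
    using hilbert_special[OF pp _ Gnd] G1 Gpow unfolding s_def P_def by simp

  define Dm where "Dm = (de, 0::rat, 0::rat, 1::rat)"
  define Em where "Em = (1 / de, 0::rat, 0::rat, 1::rat)"
  define Xm where "Xm = (1::rat, y, 0::rat, 1::rat)"
  define Ym where "Ym = (1::rat, 0::rat, y, 1::rat)"
  define DXm where "DXm = (de, x, 0::rat, 1::rat)"
  define Um where "Um = (1::rat, x, 0::rat, 1::rat)"
  define Mm where "Mm = (1 + x * y, x, y, 1::rat)"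
  define Hm where "Hm = (1 + x * y + lam, x, y, 1 + lam)"
  define Im where "Im = (1::rat, 0::rat, 0::rat, 1::rat)"
  define Pm where "Pm = rmul Mm Hm"
  define Hi where "Hi = ((1 + lam) / P, - x / P, - y / P, (1 + x * y + lam) / P)"

  have m1: "rmul Dm Xm = DXm" using dey by (simp add: Dm_def Xm_def DXm_def rmul_simp)
  have m2: "rmul DXm Em = Um" using de0 by (simp add: DXm_def Em_def Um_def rmul_simp)
  have m3: "rmul Dm Em = Im" using de0 by (simp add: Dm_def Em_def Im_def rmul_simp)
  have m4: "rmul Um Ym = Mm" by (simp add: Um_def Ym_def Mm_def rmul_simp)
  have m5: "rmul Hm Mm = Pm" by (simp add: Pm_def Hm_def Mm_def rmul_simp algebra_simps)
  have m6: "rmul Pm Im = Pm" by (simp add: Pm_def Im_def Hm_def Mm_def rmul_simp)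
  have dH0: "(1 + x * y + lam) * (1 + lam) - x * y = s * lam + 1"
    unfolding xy by (simp add: algebra_simps)
  have dH: "(1 + x * y + lam) * (1 + lam) - x * y = P" using dH0 slam by simp
  have detH: "rdet Hm = P" using dH by (simp add: Hm_def rdet_simp)
  have detM: "rdet Mm = 1" by (simp add: Mm_def rdet_simp)
  have detP: "rdet Pm = P" unfolding Pm_def rdet_rmul detH detM by simp
  have m7: "rmul Hm Hi = Im"
  proof -
    have e1: "(1 + x * y + lam) * ((1 + lam) / P) + x * (- y / P) = ((1 + x * y + lam) * (1 + lam) - x * y) / P"
      using P0 by (simp add: field_simps)
    have e2: "y * ((1 + lam) / P) + (1 + lam) * (- y / P) = 0" using P0 by (simp add: field_simps)
    have e3: "(1 + x * y + lam) * (- x / P) + x * ((1 + x * y + lam) / P) = 0" using P0 by (simp add: field_simps)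
    have e4: "y * (- x / P) + (1 + lam) * ((1 + x * y + lam) / P) = ((1 + x * y + lam) * (1 + lam) - x * y) / P"
      using P0 by (simp add: field_simps)
    show ?thesis unfolding Hm_def Hi_def Im_def rmul_simp e1 e2 e3 e4 dH using P0 by simp
  qed
  have detHi: "rdet Hi \<noteq> 0"
  proof
    assume "rdet Hi = 0"
    hence "rdet (rmul Hm Hi) = 0" unfolding rdet_rmul by simp
    thus False unfolding m7 Im_def rdet_simp by simp
  qed
  have cPc: "y * (1 + x * y + lam) + 1 * y = y * s" unfolding xy by (simp add: algebra_simps)
  have cP: "rc Pm = y * s"
    unfolding Pm_def Mm_def Hm_def rmul_simp cPc using y0 sne by (simp add: rc_c)
  have cD: "rc Dm = 1" and cE: "rc Em = 1" and cX: "rc Xm = 1" and cDX: "rc DXm = 1"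
    and cU: "rc Um = 1" and cI: "rc Im = 1"
    by (simp_all add: Dm_def Em_def Xm_def DXm_def Um_def Im_def rc_def)
  have cY: "rc Ym = y" and cM: "rc Mm = y" and cH: "rc Hm = y"
    using y0 by (simp_all add: Ym_def Mm_def Hm_def rc_def)
  have dD: "rdet Dm = de" and dE: "rdet Em = 1 / de" and dX: "rdet Xm = 1" and dY: "rdet Ym = 1"
    and dDX: "rdet DXm = de" and dU: "rdet Um = 1" and dI: "rdet Im = 1"
    by (simp_all add: Dm_def Em_def Xm_def Ym_def DXm_def Um_def Im_def rdet_simp)

  have GtD: "(phi p Dm, 1) \<in> Gt p" using Gt_phi[OF pp] dD de0 by simp
  have GtE: "(phi p Em, 1) \<in> Gt p" using Gt_phi[OF pp] dE de0 by simp
  have GtX: "(phi p Xm, 1) \<in> Gt p" using Gt_phi[OF pp] dX by simp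
  have GtY: "(phi p Ym, 1) \<in> Gt p" using Gt_phi[OF pp] dY by simp
  have GtDX: "(phi p DXm, 1) \<in> Gt p" using Gt_phi[OF pp] dDX de0 by simp
  have GtU: "(phi p Um, 1) \<in> Gt p" using Gt_phi[OF pp] dU by simp
  have GtM: "(phi p Mm, 1) \<in> Gt p" using Gt_phi[OF pp] detM by simp
  have GtH: "(phi p Hm, 1) \<in> Gt p" using Gt_phi[OF pp] detH P0 by simp
  have GtP: "(phi p Pm, 1) \<in> Gt p" using Gt_phi[OF pp] detP P0 by simp
  have GtIm: "(phi p Im, -1) \<in> Gt p" using Gt_phi[OF pp] dI by simp

  have g1: "gt_mult p (phi p Dm, 1) (phi p Xm, 1) = (phi p DXm, 1)"
    using gt_mult_phi[OF pp, of Dm Xm 1 1] hilbert_one_left[OF pp de0] by (simp add: m1 cD cX cDX dD)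
  have g2: "gt_mult p (phi p DXm, 1) (phi p Em, 1) = (phi p Um, 1)"
    using gt_mult_phi[OF pp, of DXm Em 1 1] hilbert_one_left[OF pp de0] by (simp add: m2 cDX cE cU dDX)
  have g3: "gt_mult p (phi p Dm, 1) (phi p Em, 1) = (phi p Im, 1)"
    using gt_mult_phi[OF pp, of Dm Em 1 1] hilbert_one_left[OF pp de0] by (simp add: m3 cD cE cI dD)
  have g4: "gt_mult p (phi p Um, 1) (phi p Ym, 1) = (phi p Mm, 1)"
    using gt_mult_phi[OF pp, of Um Ym 1 1] hilbert_one_right[OF pp, of y] y0 by (simp add: m4 cU cY cM dU)
  have a51: "rc Pm / rc Mm = s" and a52: "rdet Mm * rc Pm / rc Hm = s"
    using cP cM cH detM y0 by simp_all
  have g5: "gt_mult p (phi p Mm, 1) (phi p Hm, 1) = (phi p Pm, 1)"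
    using gt_mult_phi[OF pp, of Mm Hm 1 1] hilbert_same_unit[OF pp sne sval] cM cH y0
    unfolding Pm_def[symmetric] a51 a52 by simp
  have a61: "rc Pm / rc Hm = s" and a62: "rdet Hm * rc Pm / rc Mm = P * s"
    using cP cM cH detH y0 by simp_all
  have g6: "gt_mult p (phi p Hm, 1) (phi p Mm, 1) = (phi p Pm, -1)"
    using gt_mult_phi[OF pp, of Hm Mm 1 1] Hsp cM cH y0
    unfolding m5 a61 a62 by simp
  have a71: "rc Pm / rc Pm = 1" and a72: "rdet Pm * rc Pm / rc Im = P * (y * s)"
    using cP cI detP y0 sne by simp_all
  have g7: "gt_mult p (phi p Pm, 1) (phi p Im, -1) = (phi p Pm, -1)"
    using gt_mult_phi[OF pp, of Pm Im 1 "-1"] hilbert_one_left[OF pp, of "P * (y * s)"] cP cI y0 sne P0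
    unfolding m6 a71 a72 by simp
  define t where "t = hilbert p (qof_rat p (rc (rmul Hm Hi) / rc Hm)) (qof_rat p (rdet Hm * rc (rmul Hm Hi) / rc Hi))"
  have tt: "t * t = 1" using hilbert_pm[of p] unfolding t_def by (metis mult_1 mult_minus1 minus_minus)
  have GtHi: "(phi p Hi, t) \<in> Gt p" using Gt_phi[OF pp detHi] hilbert_pm[of p] unfolding t_def by blast
  have g8a: "gt_mult p (phi p Hm, 1) (phi p Hi, t) = (phi p (rmul Hm Hi), 1 * t * t)"
    unfolding t_def by (rule gt_mult_phi[OF pp]) (use rc_nz[OF detHi] cH y0 in auto)
  have g8: "gt_mult p (phi p Hm, 1) (phi p Hi, t) = gt_one p"
    using g8a tt m7 unfolding gt_one_phi Im_def by simp

  have rX: "\<rho> (phi p Xm, 1) = mat 1"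
    by (rule KN) (unfold Xm_def, rule Kn_phi[OF pp], simp_all add: rdet_simp ysm)
  have rY: "\<rho> (phi p Ym, 1) = mat 1"
    by (rule KN) (unfold Ym_def, rule Kn_phi[OF pp], simp_all add: rdet_simp ysm)
  have r1: "\<rho> (phi p DXm, 1) = \<rho> (phi p Dm, 1)" using mult[OF GtD GtX] g1 rX by simp
  have r2: "\<rho> (phi p Um, 1) = \<rho> (phi p Dm, 1) ** \<rho> (phi p Em, 1)" using mult[OF GtDX GtE] g2 r1 by simp
  have r3: "\<rho> (phi p Dm, 1) ** \<rho> (phi p Em, 1) = mat 1"
    using mult[OF GtD GtE] g3 one gt_one_phi unfolding Im_def by simp
  have r4: "\<rho> (phi p Mm, 1) = mat 1" using mult[OF GtU GtY] g4 r2 r3 rY by simp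
  have r5: "\<rho> (phi p Pm, 1) = \<rho> (phi p Hm, 1)" using mult[OF GtM GtH] g5 r4 by simp
  have r6: "\<rho> (phi p Pm, -1) = \<rho> (phi p Hm, 1)" using mult[OF GtH GtM] g6 r4 by simp
  have r7: "\<rho> (phi p Pm, -1) = \<rho> (phi p Pm, 1) ** (- mat 1)"
    using mult[OF GtP GtIm] g7 neg unfolding Im_def by simp
  let ?R = "\<rho> (phi p Hm, 1)"
  have "?R ** (- mat 1) = ?R" using r5 r6 r7 by simp
  moreover have "?R + ?R ** (- mat 1) = 0" using matrix_add_ldistrib[of ?R "mat 1" "- mat 1"] by simp
  ultimately have RR: "?R + ?R = 0" by simp
  have R0: "?R = 0"
  proof (subst vec_eq_iff, intro allI, subst vec_eq_iff, intro allI)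
    fix i j
    have h: "?R $ i $ j + ?R $ i $ j = 0" using RR by (metis vector_add_component zero_index)
    hence "(2::'k) * (?R $ i $ j) = 0" by (simp only: mult_2)
    hence "?R $ i $ j = 0" using two by (simp only: mult_eq_0_iff) blast
    thus "?R $ i $ j = 0 $ i $ j" by (simp only: zero_index)
  qed
  have "\<rho> (gt_mult p (phi p Hm, 1) (phi p Hi, t)) = ?R ** \<rho> (phi p Hi, t)" by (rule mult[OF GtH GtHi])
  hence M10: "mat 1 = (0 :: 'k ^'n ^'n)" using g8 one R0 by simp
  obtain i :: 'n where True by blast
  have "(mat 1 :: 'k ^'n ^'n) $ i $ i = 1" by (simp add: mat_def)
  thus False using M10 by simp
qed


end
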